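(* Let $G^\sigma$ be an oriented graph whose underlying graph $G$ is a simple connected graph with $n$ vertices and $m$ edges. Then $$\frac{sr(G^\sigma)}{\alpha(G)}\geqslant \frac{4(2n-m-1)}{\sqrt{4n(n-1)-8m+1}+1}-2,$$ with equality if and only if $G\cong S_n$ or $G\cong C_3$.
   Context: An oriented graph $G^\sigma$ is obtained from a simple graph $G$ by assigning a direction to each edge. Its skew-adjacency matrix $S(G^\sigma)=[s_{x,y}]$ has $s_{x,y}=1$ if there is an arc from $x$ to $y$, $s_{x,y}=-1$ if there is an arc from $y$ to $x$, and $0$ otherwise; the skew-rank $sr(G^\sigma)$ is the rank of $S(G^\sigma)$. $\alpha(G)$ is the independence number of $G$. $S_n$ denotes the star on $n$ vertices (the single vertex when $n=1$) and $C_3$ the triangle. *)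

theory Defs
  imports "HOL-Analysis.Analysis"
begin

text \<open>An oriented graph on the finite vertex type 'n is given by its arc set Ar:
  no loops, and at most one direction for each pair of vertices.\<close>
definition oriented :: "('n \<times> 'n) set \<Rightarrow> bool" where
  "oriented Ar \<longleftrightarrow> (\<forall>x. (x, x) \<notin> Ar) \<and> (\<forall>x y. (x, y) \<in> Ar \<longrightarrow> (y, x) \<notin> Ar)"

definition uedges :: "('n \<times> 'n) set \<Rightarrow> 'n set set" where
  "uedges Ar = {{x, y} | x y. (x, y) \<in> Ar}"

definition adj :: "('n \<times> 'n) set \<Rightarrow> 'n \<Rightarrow> 'n \<Rightarrow> bool" where
  "adj Ar x y \<longleftrightarrow> (x, y) \<in> Ar \<or> (y, x) \<in> Ar"

definition connected_graph :: "('n \<times> 'n) set \<Rightarrow> bool" where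
  "connected_graph Ar \<longleftrightarrow> (\<forall>x y. (x, y) \<in> {(u, v). adj Ar u v}\<^sup>*)"

definition skew_adj :: "('n::finite \<times> 'n) set \<Rightarrow> real^'n^'n" where
  "skew_adj Ar = (\<chi> x y. if (x, y) \<in> Ar then 1 else if (y, x) \<in> Ar then -1 else 0)"

definition skew_rank :: "('n::finite \<times> 'n) set \<Rightarrow> nat" where
  "skew_rank Ar = rank (skew_adj Ar)"

definition independent_set :: "('n \<times> 'n) set \<Rightarrow> 'n set \<Rightarrow> bool" where
  "independent_set Ar I \<longleftrightarrow> (\<forall>x\<in>I. \<forall>y\<in>I. \<not> adj Ar x y)"

definition independence_number :: "('n::finite \<times> 'n) set \<Rightarrow> nat" where
  "independence_number Ar = Max {card I | I. independent_set Ar I}"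

definition iso_to :: "('n \<times> 'n) set \<Rightarrow> nat \<Rightarrow> nat set set \<Rightarrow> bool" where
  "iso_to Ar k E \<longleftrightarrow> (\<exists>f. bij_betw f UNIV {0..<k} \<and>
      (\<forall>x y. {x, y} \<in> uedges Ar \<longleftrightarrow> {f x, f y} \<in> E))"

text \<open>Star S_k on vertices {0..<k} with centre 0 (a single vertex when k = 1).\<close>
definition star_edges :: "nat \<Rightarrow> nat set set" where
  "star_edges k = {{0, i} | i. 1 \<le> i \<and> i < k}"

definition triangle_edges :: "nat set set" where
  "triangle_edges = {{0, 1}, {1, 2}, {0, 2}}"

end

theory Submission
  imports Defs
begin


definition del :: "('n \<times> 'n) set \<Rightarrow> 'n set \<Rightarrow> ('n \<times> 'n) set" where
  "del Ar Z = {(a, b). (a, b) \<in> Ar \<and> a \<notin> Z \<and> b \<notin> Z}"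

definition nb :: "('n \<times> 'n) set \<Rightarrow> 'n \<Rightarrow> 'n set" where
  "nb Ar p = {y. adj Ar p y}"

definition KK :: "('n::finite \<times> 'n) set \<Rightarrow> (real^'n) set" where
  "KK Ar = {x. \<forall>(a, b)\<in>Ar. x$a = x$b}"

lemma oriented_del: "oriented Ar \<Longrightarrow> oriented (del Ar Z)"
  by (auto simp: oriented_def del_def)

lemma indep_fin: "finite {card I |I. independent_set (Ar::('n::finite \<times> 'n) set) I}"
proof -
  have "{card I |I. independent_set Ar I} = card ` {I. independent_set Ar I}" by auto
  then show ?thesis by simp
qed

lemma indep_le: "independent_set (Ar::('n::finite \<times> 'n) set) I \<Longrightarrow> card I \<le> independence_number Ar"
  unfolding independence_number_def using indep_fin by (intro Max_ge) auto

lemma indep_ex: "\<exists>I. independent_set (Ar::('n::finite \<times> 'n) set) I \<and> card I = independence_number Ar"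
proof -
  have "independent_set Ar {}" by (simp add: independent_set_def)
  then have ne: "{card I |I. independent_set Ar I} \<noteq> {}" by auto
  have "independence_number Ar \<in> {card I |I. independent_set Ar I}"
    unfolding independence_number_def using Max_in[OF indep_fin ne] .
  then show ?thesis by auto
qed

lemma indep_pos: "oriented (Ar::('n::finite \<times> 'n) set) \<Longrightarrow> 1 \<le> independence_number Ar"
proof -
  assume o: "oriented Ar"
  obtain x :: 'n where True by simp
  have "independent_set Ar {x}" using o by (auto simp: independent_set_def adj_def oriented_def)
  then show ?thesis using indep_le[of Ar "{x}"] by simp
qed

lemma indep_del:
  fixes Ar :: "('n::finite \<times> 'n) set"
  assumes "\<forall>(a,b)\<in>Ar. (a \<in> Z \<or> b \<in> Z) \<longrightarrow> (a = p \<or> b = p)"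
  shows "independence_number (del Ar Z) \<le> independence_number Ar + 1"
proof -
  obtain I where I: "independent_set (del Ar Z) I" "card I = independence_number (del Ar Z)"
    using indep_ex by blast
  have "independent_set Ar (I - {p})"
    using I(1) assms unfolding independent_set_def adj_def del_def by blast
  then have "card (I - {p}) \<le> independence_number Ar" by (rule indep_le)
  moreover have "card I \<le> card (I - {p}) + 1"
    by (cases "p \<in> I") (auto simp: card_Diff1_le)
  ultimately show ?thesis using I(2) by simp
qed



lemma card_del:
  fixes Ar :: "('n::finite \<times> 'n) set"
  assumes o: "oriented Ar" and p: "p \<in> Z"
    and h: "\<forall>(a,b)\<in>Ar. (a \<in> Z \<or> b \<in> Z) \<longrightarrow> (a = p \<or> b = p)"
  shows "card Ar = card (del Ar Z) + card (nb Ar p)"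
proof -
  let ?T = "{(a,b). (a,b) \<in> Ar \<and> (a = p \<or> b = p)}"
  have split: "Ar = del Ar Z \<union> ?T" using h p by (auto simp: del_def)
  have disj: "del Ar Z \<inter> ?T = {}" using p by (auto simp: del_def)
  have "bij_betw (\<lambda>(a,b). if a = p then b else a) ?T (nb Ar p)"
    unfolding bij_betw_def inj_on_def
  proof (intro conjI ballI impI)
    fix x y assume "x \<in> ?T" "y \<in> ?T"
      "(case x of (a, b) \<Rightarrow> if a = p then b else a) = (case y of (a, b) \<Rightarrow> if a = p then b else a)"
    then show "x = y" using o unfolding oriented_def by (auto split: if_splits)
  next
    show "(\<lambda>(a,b). if a = p then b else a) ` ?T = nb Ar p"
    proof
      show "(\<lambda>(a,b). if a = p then b else a) ` ?T \<subseteq> nb Ar p"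
        using o unfolding oriented_def nb_def adj_def by auto
      show "nb Ar p \<subseteq> (\<lambda>(a,b). if a = p then b else a) ` ?T"
      proof
        fix y assume "y \<in> nb Ar p"
        then have "(p,y) \<in> Ar \<or> (y,p) \<in> Ar" by (simp add: nb_def adj_def)
        then show "y \<in> (\<lambda>(a,b). if a = p then b else a) ` ?T"
        proof
          assume "(p,y) \<in> Ar" then show ?thesis by (intro image_eqI[of _ _ "(p,y)"]) auto
        next
          assume a: "(y,p) \<in> Ar"
          then have "y \<noteq> p" using o by (auto simp: oriented_def)
          then show ?thesis using a by (intro image_eqI[of _ _ "(y,p)"]) auto
        qed
      qed
    qed
  qed
  then have "card ?T = card (nb Ar p)" by (rule bij_betw_same_card)
  moreover have "card Ar = card (del Ar Z) + card ?T"
    by (subst split) (rule card_Un_disjoint, auto simp: disj)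
  ultimately show ?thesis by simp
qed

lemma dim_hyper:
  fixes V :: "(real^'n::finite) set"
  assumes "subspace V"
  shows "dim V \<le> dim (V \<inter> {x. x$a = x$b}) + 1"
proof (cases "V \<subseteq> {x. x$a = x$b}")
  case True
  then have "V \<inter> {x. x$a = x$b} = V" by auto
  then show ?thesis by simp
next
  case False
  then obtain z where z: "z \<in> V" "z$a \<noteq> z$b" by auto
  let ?H = "V \<inter> {x. x$a = x$b}"
  have "V \<subseteq> span (insert z ?H)"
  proof
    fix x assume x: "x \<in> V"
    define c where "c = (x$a - x$b) / (z$a - z$b)"
    have "x - c *\<^sub>R z \<in> ?H"
      using x z assms by (auto simp: c_def field_simps subspace_diff subspace_scale)
    then have "x - c *\<^sub>R z \<in> span (insert z ?H)" by (simp add: span_base)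
    moreover have "c *\<^sub>R z \<in> span (insert z ?H)" by (simp add: span_base span_scale)
    ultimately have "(x - c *\<^sub>R z) + c *\<^sub>R z \<in> span (insert z ?H)" by (rule span_add)
    then show "x \<in> span (insert z ?H)" by simp
  qed
  then have "dim V \<le> dim (insert z ?H)" by (rule dim_mono)
  also have "\<dots> \<le> dim ?H + 1" by (simp add: dim_insert)
  finally show ?thesis .
qed

lemma dim_hypers:
  fixes V :: "(real^'n::finite) set"
  assumes "subspace V" "finite Y"
  shows "dim V \<le> dim (V \<inter> {x. \<forall>y\<in>Y. x$p = x$y}) + card Y"
  using assms(2)
proof (induction Y rule: finite_induct)
  case empty then show ?case by simp
next
  case (insert y Y)
  let ?W = "V \<inter> {x. \<forall>y\<in>Y. x$p = x$y}"
  have sw: "subspace ?W"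
    using assms(1) by (intro subspace_inter) (auto simp: subspace_def)
  have eq: "V \<inter> {x. \<forall>y'\<in>insert y Y. x$p = x$y'} = ?W \<inter> {x. x$p = x$y}" by auto
  have "dim ?W \<le> dim (?W \<inter> {x. x$p = x$y}) + 1" using sw by (rule dim_hyper)
  with insert.IH have "dim V \<le> dim (?W \<inter> {x. x$p = x$y}) + Suc (card Y)" by linarith
  then show ?case by (simp only: eq card_insert_disjoint[OF insert.hyps(1,2)])
qed

definition Dm :: "'n set \<Rightarrow> real^'n^'n" where
  "Dm Z = (\<chi> i j. if i = j \<and> i \<notin> Z then 1 else 0)"

lemma Dm_left: "(Dm Z ** M) $ i $ j = (if i \<notin> Z then M $ i $ j else 0)"
proof -
  have "(\<Sum>k\<in>UNIV. Dm Z $ i $ k * M $ k $ j) = (\<Sum>k\<in>UNIV. if k = i then (if i \<notin> Z then M $ i $ j else 0) else 0)"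
    by (rule sum.cong) (auto simp: Dm_def)
  then show ?thesis by (simp add: matrix_matrix_mult_def)
qed

lemma Dm_right: "(M ** Dm Z) $ i $ j = (if j \<notin> Z then M $ i $ j else 0)"
proof -
  have "(\<Sum>k\<in>UNIV. M $ i $ k * Dm Z $ k $ j) = (\<Sum>k\<in>UNIV. if k = j then (if j \<notin> Z then M $ i $ j else 0) else 0)"
    by (rule sum.cong) (auto simp: Dm_def)
  then show ?thesis by (simp add: matrix_matrix_mult_def)
qed

lemma skew_del: "skew_adj (del Ar Z) = Dm Z ** skew_adj Ar ** Dm Z"
  by (simp add: vec_eq_iff Dm_left Dm_right skew_adj_def del_def)

lemma rank_del: "skew_rank (del Ar Z) \<le> skew_rank Ar"
  unfolding skew_rank_def skew_del
  by (meson le_trans rank_mul_le_left rank_mul_le_right)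



lemma mv_comp: "(M *v x) $ i = (\<Sum>j\<in>UNIV. M $ i $ j * x $ j)"
  by (simp add: matrix_vector_mult_def)

lemma skew_zero: "\<not> adj Ar i j \<Longrightarrow> skew_adj Ar $ i $ j = 0"
  by (simp add: skew_adj_def adj_def)

lemma rank_pend:
  fixes Ar :: "('n::finite \<times> 'n) set"
  assumes o: "oriented Ar" and nv: "nb Ar v = {u}"
  shows "skew_rank (del Ar {u,v}) + 2 \<le> skew_rank Ar"
proof -
  define A where "A = skew_adj Ar"
  define A' where "A' = skew_adj (del Ar {u,v})"
  have adjvu: "adj Ar v u" using nv by (auto simp: nb_def)
  have uv: "u \<noteq> v" using adjvu o by (auto simp: adj_def oriented_def)
  have adjv: "adj Ar i v \<longleftrightarrow> i = u" for i
    using nv by (auto simp: nb_def adj_def)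
  have adjv': "adj Ar v j \<longleftrightarrow> j = u" for j
    using nv by (auto simp: nb_def adj_def)
  define s where "s = A $ u $ v"
  have s: "s = 1 \<or> s = -1"
    using adjv[of u] o unfolding s_def A_def skew_adj_def adj_def oriented_def by auto
  have ss: "s * s = 1" using s by auto
  have Avu: "A $ v $ u = - s"
    using adjv[of u] o unfolding s_def A_def skew_adj_def adj_def oriented_def by auto
  have Aiv: "A $ i $ v = (if i = u then s else 0)" for i
    using skew_zero[of Ar i v] adjv[of i] by (auto simp: A_def s_def)
  have Avj: "j \<noteq> u \<Longrightarrow> A $ v $ j = 0" for j
    using skew_zero[of Ar v j] adjv'[of j] by (auto simp: A_def)
  have A'e: "A' $ i $ j = (if i \<notin> {u,v} \<and> j \<notin> {u,v} then A $ i $ j else 0)" for i j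
    by (simp add: A'_def A_def skew_adj_def del_def)
  have colv: "A *v axis v 1 = s *\<^sub>R axis u 1"
    by (simp add: vec_eq_iff mv_comp Aiv axis_def if_distrib[of "\<lambda>x. _ * x"] cong: if_cong)
  have incl: "A' *v x \<in> range ((*v) A)" for x
  proof -
    define x0 where "x0 = (\<chi> i. if i \<in> {u,v} then 0 else x $ i)"
    define y where "y = A *v x0"
    have yv: "y $ v = 0"
      unfolding y_def mv_comp
      by (rule sum.neutral) (auto simp: x0_def Avj)
    have eq: "A *v (x0 - (y$u * s) *\<^sub>R axis v 1) = y - (y $ u) *\<^sub>R axis u 1"
      using ss by (simp add: matrix_vector_mult_diff_distrib matrix_vector_mult_scaleR colv y_def)
    have "A' *v x = y - (y $ u) *\<^sub>R axis u 1"
    proof (subst vec_eq_iff, intro allI)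
      fix i
      show "(A' *v x) $ i = (y - (y $ u) *\<^sub>R axis u 1) $ i"
      proof (cases "i \<in> {u,v}")
        case True
        then have "(A' *v x) $ i = 0" by (simp add: mv_comp A'e)
        then show ?thesis using True yv uv by (auto simp: axis_def)
      next
        case False
        have "(A' *v x) $ i = (\<Sum>j\<in>UNIV. A $ i $ j * x0 $ j)"
          unfolding mv_comp
          by (rule sum.cong) (use False in \<open>auto simp: A'e x0_def\<close>)
        then show ?thesis using False by (simp add: y_def axis_def mv_comp)
      qed
    qed
    then show ?thesis using eq by (metis rangeI)
  qed
  define R where "R = range ((*v) A)"
  define R' where "R' = range ((*v) A')"
  have R'0: "span R' \<subseteq> {w. w $ u = 0 \<and> w $ v = 0}"
  proof (rule span_minimal)
    show "R' \<subseteq> {w. w $ u = 0 \<and> w $ v = 0}"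
      by (auto simp: R'_def mv_comp A'e)
    show "subspace {w::real^'n. w $ u = 0 \<and> w $ v = 0}"
      by (auto simp: subspace_def)
  qed
  define a where "a = A *v axis v 1"
  define b where "b = A *v axis u 1"
  have aeq: "a = s *\<^sub>R axis u 1" by (simp add: a_def colv)
  have au: "a $ u = s" and av: "a $ v = 0" using uv by (auto simp: aeq axis_def)
  have bv: "b $ v = - s" by (simp add: b_def mv_comp axis_def Avu if_distrib[of "\<lambda>x. _ * x"] cong: if_cong)
  have "a \<notin> span R'" using R'0 au s by auto
  then have d1: "dim (insert a R') = dim R' + 1" by (simp add: dim_insert)
  have "span (insert a R') \<subseteq> {w. w $ v = 0}"
  proof (rule span_minimal)
    show "insert a R' \<subseteq> {w. w $ v = 0}" using av R'0 span_superset by fastforce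
    show "subspace {w::real^'n. w $ v = 0}" by (auto simp: subspace_def)
  qed
  then have "b \<notin> span (insert a R')" using bv s by auto
  then have d2: "dim (insert b (insert a R')) = dim R' + 2" using d1 by (simp add: dim_insert)
  have "insert b (insert a R') \<subseteq> R"
    using incl by (auto simp: R_def R'_def a_def b_def)
  then have "dim (insert b (insert a R')) \<le> dim R" by (rule dim_subset)
  then show ?thesis
    using d2 unfolding skew_rank_def rank_dim_range A_def[symmetric] A'_def[symmetric] R_def R'_def
    by simp
qed



lemma adj_sym: "adj Ar x y = adj Ar y x"
  by (auto simp: adj_def)

lemma KK_adj: "x \<in> KK Ar \<Longrightarrow> adj Ar a b \<Longrightarrow> x $ a = x $ b"
  by (auto simp: KK_def adj_def)

lemma const_path:
  "successively (adj Ar) zs \<Longrightarrow> x \<in> KK Ar \<Longrightarrow> z \<in> set zs \<Longrightarrow> x $ z = x $ hd zs"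
proof (induction zs arbitrary: z rule: induct_list012)
  case 1 then show ?case by simp
next
  case (2 u) then show ?case by simp
next
  case (3 z1 z2 zs)
  have s: "adj Ar z1 z2" "successively (adj Ar) (z2#zs)" using 3(3) by simp_all
  have e: "x$z2 = x$z1" using KK_adj[OF 3(4) s(1)] by simp
  show ?case
  proof (cases "z = z1")
    case True then show ?thesis by simp
  next
    case False
    then have zin: "z \<in> set (z2#zs)" using 3(5) by simp
    have "x$z = x$hd (z2#zs)" by (rule 3(2)[OF s(2) 3(4) zin])
    then have "x$z = x$z2" by simp
    then show ?thesis using e by simp
  qed
qed

lemma path_choice:
  fixes Ar :: "('n::finite \<times> 'n) set"
  assumes o: "oriented Ar" and ne: "Ar \<noteq> {}"
  shows "(\<exists>u v. nb Ar v = {u}) \<or>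
         (\<exists>w y1 y2. y1 \<in> nb Ar w \<and> y2 \<in> nb Ar w \<and> y1 \<noteq> y2 \<and> (\<forall>x\<in>KK (del Ar {w}). x$y1 = x$y2))"
proof -
  define P where "P xs \<longleftrightarrow> distinct xs \<and> successively (adj Ar) xs" for xs
  obtain a b where ab: "(a,b) \<in> Ar" using ne by auto
  then have "a \<noteq> b" using o by (auto simp: oriented_def)
  then have P2: "P [a,b]" using ab by (auto simp: P_def adj_def)
  have bnd: "\<forall>y. (\<exists>xs. P xs \<and> length xs = y) \<longrightarrow> y \<le> CARD('n)"
  proof (intro allI impI)
    fix y assume "\<exists>xs. P xs \<and> length xs = y"
    then obtain xs where "P xs" "length xs = y" by auto
    then have "card (set xs) = y" by (simp add: P_def distinct_card)
    then show "y \<le> CARD('n)" using card_mono[of UNIV "set xs"] by simp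
  qed
  obtain L where L: "\<exists>xs. P xs \<and> length xs = L" "\<forall>y. (\<exists>xs. P xs \<and> length xs = y) \<longrightarrow> y \<le> L"
  proof -
    have "\<exists>xs. P xs \<and> length xs = 2" using P2 by (intro exI[of _ "[a,b]"]) simp
    from Nat.ex_has_greatest_nat[of "\<lambda>y. \<exists>xs. P xs \<and> length xs = y" 2, OF this bnd]
    show ?thesis using that by blast
  qed
  obtain xs where xs: "P xs" "length xs = L" using L(1) by auto
  have "length [a,b] \<le> L" using L(2) P2 by blast
  then have "2 \<le> L" by simp
  then have "\<exists>v0 v1 rest. xs = v0 # v1 # rest" using xs(2)
    by (auto simp: numeral_2_eq_2 Suc_le_length_iff)
  then obtain v0 v1 rest where xs_eq: "xs = v0 # v1 # rest" by blast
  have a01: "adj Ar v0 v1" using xs(1) xs_eq by (simp add: P_def)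
  have inset: "y \<in> set xs" if "adj Ar v0 y" for y
  proof (rule ccontr)
    assume "y \<notin> set xs"
    moreover have "adj Ar y v0" using that by (auto simp: adj_def)
    ultimately have "P (y # xs)" using xs(1) xs_eq by (simp add: P_def)
    then have "length (y # xs) \<le> L" using L(2) by blast
    then show False using xs(2) by simp
  qed
  show ?thesis
  proof (cases "nb Ar v0 = {v1}")
    case True then show ?thesis by blast
  next
    case False
    have "v1 \<in> nb Ar v0" using a01 by (simp add: nb_def)
    with False obtain y where y: "y \<in> nb Ar v0" "y \<noteq> v1" by blast
    have "y \<noteq> v0"
    proof
      assume "y = v0"
      then have "(v0,v0) \<in> Ar" using y by (simp add: nb_def adj_def)
      with o show False by (simp add: oriented_def)
    qed
    then have yin: "y \<in> set (v1 # rest)" using inset[of y] y xs_eq by (auto simp: nb_def)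
    have v0n: "v0 \<notin> set (v1 # rest)" using xs(1) xs_eq by (simp add: P_def)
    have succ: "successively (adj Ar) (v1 # rest)" using xs(1) xs_eq by (simp add: P_def)
    have succ': "successively (adj (del Ar {v0})) (v1 # rest)"
      by (rule successively_mono[OF succ]) (use v0n in \<open>auto simp: adj_def del_def\<close>)
    have "\<forall>x\<in>KK (del Ar {v0}). x$v1 = x$y"
      using const_path[OF succ' _ yin] by auto
    then show ?thesis
      apply (rule_tac disjI2)
      apply (rule_tac x=v0 in exI)
      apply (rule_tac x=v1 in exI)
      apply (rule_tac x=y in exI)
      using y \<open>v1 \<in> nb Ar v0\<close> by auto
  qed
qed

lemma KK_alt: "KK Ar = {x. \<forall>a b. (a,b) \<in> Ar \<longrightarrow> x$a = x$b}"
  by (auto simp: KK_def)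

lemma subspace_KK: "subspace (KK Ar)"
  by (auto simp: subspace_def KK_alt)



lemma key:
  fixes Ar :: "('n::finite \<times> 'n) set"
  assumes "oriented Ar"
  shows "4 * CARD('n) \<le> skew_rank Ar + 2 * independence_number Ar + 2 * card Ar + 2 * dim (KK Ar)"
  using assms
proof (induction "card Ar" arbitrary: Ar rule: less_induct)
  case less
  note o = less.prems
  show ?case
  proof (cases "Ar = {}")
    case True
    have "skew_adj Ar = 0" using True by (simp add: skew_adj_def vec_eq_iff)
    then have r: "skew_rank Ar = 0" by (simp add: skew_rank_def)
    have "independent_set Ar UNIV" using True by (simp add: independent_set_def adj_def)
    then have a: "CARD('n) \<le> independence_number Ar" by (rule indep_le)
    have "KK Ar = UNIV" using True by (simp add: KK_def)
    then have "dim (KK Ar) = CARD('n)" by simp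
    then show ?thesis using a r by simp
  next
    case False
    have fin: "finite (nb Ar p)" for p by simp
    from path_choice[OF o False] show ?thesis
    proof
      assume "\<exists>u v. nb Ar v = {u}"
      then obtain u v where nv: "nb Ar v = {u}" by blast
      have adjv: "adj Ar v j \<longleftrightarrow> j = u" for j using nv by (auto simp: nb_def)
      have h: "\<forall>(a,b)\<in>Ar. (a \<in> {u,v} \<or> b \<in> {u,v}) \<longrightarrow> (a = u \<or> b = u)"
        using adjv by (auto simp: adj_def)
      let ?A = "del Ar {u,v}"
      have cd: "card Ar = card ?A + card (nb Ar u)" using card_del[OF o _ h] by simp
      have "v \<in> nb Ar u" using adjv by (auto simp: nb_def adj_sym)
      then have "card (nb Ar u) \<ge> 1" using fin[of u] by (metis One_nat_def Suc_leI card_gt_0_iff empty_iff)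
      then have lt: "card ?A < card Ar" using cd by simp
      have IH: "4 * CARD('n) \<le> skew_rank ?A + 2 * independence_number ?A + 2 * card ?A + 2 * dim (KK ?A)"
        using less.hyps[OF lt] oriented_del[OF o] by blast
      have r: "skew_rank ?A + 2 \<le> skew_rank Ar" by (rule rank_pend[OF o nv])
      have al: "independence_number ?A \<le> independence_number Ar + 1" by (rule indep_del[OF h])
      have KKeq: "KK Ar = KK ?A \<inter> {x. \<forall>y\<in>nb Ar u. x$u = x$y}"
        using h unfolding KK_def del_def nb_def adj_def by fastforce
      have "dim (KK ?A) \<le> dim (KK Ar) + card (nb Ar u)"
        using dim_hypers[OF subspace_KK fin, of ?A u u] KKeq by simp
      then show ?thesis using IH r al cd by linarith
    next
      assume "\<exists>w y1 y2. y1 \<in> nb Ar w \<and> y2 \<in> nb Ar w \<and> y1 \<noteq> y2 \<and> (\<forall>x\<in>KK (del Ar {w}). x$y1 = x$y2)"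
      then obtain w y1 y2 where y: "y1 \<in> nb Ar w" "y2 \<in> nb Ar w" "y1 \<noteq> y2"
        and c: "\<forall>x\<in>KK (del Ar {w}). x$y1 = x$y2" by blast
      have h: "\<forall>(a,b)\<in>Ar. (a \<in> {w} \<or> b \<in> {w}) \<longrightarrow> (a = w \<or> b = w)" by auto
      let ?A = "del Ar {w}"
      have cd: "card Ar = card ?A + card (nb Ar w)" using card_del[OF o _ h] by simp
      have "card (nb Ar w) \<ge> 2"
      proof -
        have "{y1,y2} \<subseteq> nb Ar w" using y by auto
        then have "card {y1,y2} \<le> card (nb Ar w)" by (rule card_mono[OF fin])
        then show ?thesis using y(3) by simp
      qed
      then have lt: "card ?A < card Ar" using cd by simp
      have IH: "4 * CARD('n) \<le> skew_rank ?A + 2 * independence_number ?A + 2 * card ?A + 2 * dim (KK ?A)"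
        using less.hyps[OF lt] oriented_del[OF o] by blast
      have r: "skew_rank ?A \<le> skew_rank Ar" by (rule rank_del)
      have al: "independence_number ?A \<le> independence_number Ar + 1" by (rule indep_del[OF h])
      have KKeq: "KK Ar = KK ?A \<inter> {x. \<forall>y\<in>nb Ar w - {y2}. x$w = x$y}"
      proof
        show "KK Ar \<subseteq> KK ?A \<inter> {x. \<forall>y\<in>nb Ar w - {y2}. x$w = x$y}"
          unfolding KK_def del_def nb_def adj_def by fastforce
      next
        show "KK ?A \<inter> {x. \<forall>y\<in>nb Ar w - {y2}. x$w = x$y} \<subseteq> KK Ar"
        proof
          fix x assume x: "x \<in> KK ?A \<inter> {x. \<forall>y\<in>nb Ar w - {y2}. x$w = x$y}"
          have wy: "x$w = x$y" if "y \<in> nb Ar w" for y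
          proof (cases "y = y2")
            case True
            then show ?thesis using x y c by auto
          next
            case False then show ?thesis using x that by auto
          qed
          show "x \<in> KK Ar"
            unfolding KK_def
          proof (clarify)
            fix a b assume ab: "(a,b) \<in> Ar"
            show "x$a = x$b"
            proof (cases "a = w \<or> b = w")
              case True
              then show ?thesis using wy[of b] wy[of a] ab by (auto simp: nb_def adj_def)
            next
              case False
              then have "(a,b) \<in> ?A" using ab by (auto simp: del_def)
              then show ?thesis using x by (auto simp: KK_def)
            qed
          qed
        qed
      qed
      have "dim (KK ?A) \<le> dim (KK Ar) + card (nb Ar w - {y2})"
        using dim_hypers[OF subspace_KK, of "nb Ar w - {y2}" ?A w] KKeq by simp
      moreover have "card (nb Ar w - {y2}) = card (nb Ar w) - 1" using y(2) by simp
      ultimately show ?thesis using IH r al cd \<open>card (nb Ar w) \<ge> 2\<close> by linarith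
    qed
  qed
qed



lemma uedges_mem: "{x,y} \<in> uedges Ar \<longleftrightarrow> adj Ar x y"
  unfolding uedges_def adj_def by (auto simp: doubleton_eq_iff)

lemma card_uedges:
  assumes o: "oriented Ar"
  shows "card (uedges Ar) = card Ar"
proof -
  have eq: "uedges Ar = (\<lambda>(a,b). {a,b}) ` Ar" by (auto simp: uedges_def)
  have "inj_on (\<lambda>(a,b). {a,b}) Ar"
  proof (rule inj_onI, clarify)
    fix a b c d assume ab: "(a,b) \<in> Ar" "(c,d) \<in> Ar" "{a,b} = {c,d}"
    then show "a = c \<and> b = d" using o by (auto simp: doubleton_eq_iff oriented_def)
  qed
  then show ?thesis by (simp add: eq card_image)
qed

lemma KK_conn:
  assumes "connected_graph Ar" "x \<in> KK Ar"
  shows "x$a = x$b"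
proof -
  have "(a,b) \<in> {(u,v). adj Ar u v}\<^sup>*" using assms(1) by (simp add: connected_graph_def)
  then show ?thesis
  proof (induction rule: rtrancl_induct)
    case (step y z)
    then show ?case using KK_adj[OF assms(2), of y z] by simp
  qed simp
qed

lemma dimKK:
  fixes Ar :: "('n::finite \<times> 'n) set"
  assumes "connected_graph Ar"
  shows "dim (KK Ar) \<le> 1"
proof -
  obtain a0 :: 'n where True by simp
  have "KK Ar \<subseteq> span {(\<chi> i. 1) :: real^'n}"
  proof
    fix x assume x: "x \<in> KK Ar"
    have "\<forall>i. x$i = x$a0" using KK_conn[OF assms x] by blast
    then have "x = (x$a0) *\<^sub>R (\<chi> i. 1)" by (simp add: vec_eq_iff)
    then show "x \<in> span {(\<chi> i. 1) :: real^'n}" by (metis span_base span_scale singletonI)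
  qed
  then have "dim (KK Ar) \<le> card {(\<chi> i. 1) :: real^'n}" by (rule dim_le_card) simp
  then show ?thesis by simp
qed

lemma ch2: "2 * (k choose 2) = k * (k - 1)"
proof (induction k)
  case (Suc k)
  have "Suc k choose 2 = k + (k choose 2)"
    by (simp add: numeral_2_eq_2)
  then show ?case using Suc by (cases k) (auto simp: algebra_simps)
qed simp

lemma alpha_bound:
  fixes Ar :: "('n::finite \<times> 'n) set"
  assumes o: "oriented Ar" and I: "independent_set Ar I"
  shows "card (uedges Ar) + (card I choose 2) \<le> CARD('n) choose 2"
    and "card (uedges Ar) + (card I choose 2) = CARD('n) choose 2 \<Longrightarrow>
         (\<forall>x y. x \<noteq> y \<longrightarrow> (adj Ar x y \<longleftrightarrow> \<not> (x \<in> I \<and> y \<in> I)))"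
proof -
  define P2 where "P2 S = {e. e \<subseteq> S \<and> card e = 2}" for S :: "'n set"
  have sub: "uedges Ar \<subseteq> P2 UNIV - P2 I"
  proof
    fix e assume "e \<in> uedges Ar"
    then obtain a b where e: "e = {a,b}" "(a,b) \<in> Ar" by (auto simp: uedges_def)
    then have "a \<noteq> b" using o by (auto simp: oriented_def)
    moreover have "\<not> (a \<in> I \<and> b \<in> I)" using I e(2) by (auto simp: independent_set_def adj_def)
    ultimately show "e \<in> P2 UNIV - P2 I" using e(1) by (auto simp: P2_def)
  qed
  have cU: "card (P2 UNIV) = CARD('n) choose 2" unfolding P2_def using n_subsets[of "UNIV::'n set" 2] by simp
  have cI: "card (P2 I) = card I choose 2" unfolding P2_def using n_subsets[of I 2] by simp
  have "P2 I \<subseteq> P2 UNIV" by (auto simp: P2_def)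
  then have cD: "card (P2 UNIV - P2 I) = (CARD('n) choose 2) - (card I choose 2)"
    using cU cI by (simp add: card_Diff_subset)
  have le: "card (P2 I) \<le> card (P2 UNIV)" using \<open>P2 I \<subseteq> P2 UNIV\<close> by (simp add: card_mono)
  have cle: "card (uedges Ar) \<le> card (P2 UNIV - P2 I)" using sub by (simp add: card_mono)
  then show "card (uedges Ar) + (card I choose 2) \<le> CARD('n) choose 2" using cD cU cI le by linarith
  assume eq: "card (uedges Ar) + (card I choose 2) = CARD('n) choose 2"
  then have "card (uedges Ar) = card (P2 UNIV - P2 I)" using cD by simp
  then have ueq: "uedges Ar = P2 UNIV - P2 I" using sub by (intro card_subset_eq) auto
  show "\<forall>x y. x \<noteq> y \<longrightarrow> (adj Ar x y \<longleftrightarrow> \<not> (x \<in> I \<and> y \<in> I))"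
  proof (intro allI impI)
    fix x y :: 'n assume "x \<noteq> y"
    then have "adj Ar x y \<longleftrightarrow> {x,y} \<in> P2 UNIV - P2 I" using ueq uedges_mem[of x y Ar] by simp
    also have "\<dots> \<longleftrightarrow> \<not> (x \<in> I \<and> y \<in> I)" using \<open>x \<noteq> y\<close> by (auto simp: P2_def)
    finally show "adj Ar x y \<longleftrightarrow> \<not> (x \<in> I \<and> y \<in> I)" .
  qed
qed

lemma real_ineq:
  fixes n m a R :: real
  assumes a1: "1 \<le> a" and k: "4*n \<le> R + 2*a + 2*m + 2" and ab: "2*m + a*(a-1) \<le> n*(n-1)"
    and R0: "0 \<le> R"
  shows "R / a \<ge> 4*(2*n - m - 1)/(sqrt (4*n*(n-1) - 8*m + 1) + 1) - 2"
    and "R / a = 4*(2*n - m - 1)/(sqrt (4*n*(n-1) - 8*m + 1) + 1) - 2 \<Longrightarrow>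
         2*m + a*(a-1) = n*(n-1) \<and> 4*n = R + 2*a + 2*m + 2"
proof -
  define s where "s = sqrt (4*n*(n-1) - 8*m + 1)"
  define A where "A = 2*n - m - 1"
  have rad: "(2*a - 1)^2 \<le> 4*n*(n-1) - 8*m + 1" using ab by (simp add: power2_eq_square algebra_simps)
  then have s1: "2*a - 1 \<le> s" unfolding s_def by (rule real_le_rsqrt)
  have sp: "0 < s + 1" using s1 a1 by linarith
  have RA: "2*A - 2*a \<le> R" using k by (simp add: A_def)
  have ap: "0 < a" using a1 by simp
  have main: "R / a \<ge> 4*A/(s+1) - 2 \<and> (R / a = 4*A/(s+1) - 2 \<longrightarrow> 0 < A \<and> R = 2*A - 2*a \<and> s + 1 = 2*a)"
  proof (cases "A \<le> 0")
    case True
    have "4*A/(s+1) \<le> 0" using True sp by (simp add: divide_nonpos_pos)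
    moreover have "0 \<le> R / a" using R0 ap by simp
    ultimately show ?thesis by linarith
  next
    case False
    then have Ap: "0 < A" by simp
    have "(2*A - 2*a) / a \<le> R / a" using RA ap by (simp add: divide_right_mono)
    moreover have "(2*A - 2*a) / a = 2*A/a - 2" using ap by (simp add: field_simps)
    moreover have f: "4*A/(s+1) \<le> 2*A/a"
      using Ap ap sp s1 by (simp add: divide_simps)
    ultimately have ge: "R / a \<ge> 4*A/(s+1) - 2" by linarith
    have "R / a = 4*A/(s+1) - 2 \<longrightarrow> R = 2*A - 2*a \<and> s + 1 = 2*a"
    proof
      assume e: "R / a = 4*A/(s+1) - 2"
      have e1: "R / a = 2*A/a - 2" and e2: "4*A/(s+1) = 2*A/a"
        using e \<open>(2*A - 2*a) / a \<le> R / a\<close> \<open>(2*A - 2*a) / a = 2*A/a - 2\<close> f by linarith+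
      from e1 have "R = 2*A - 2*a" using ap by (simp add: field_simps)
      moreover from e2 have "4*A*a = 2*A*(s+1)" using ap sp by (simp add: field_simps)
      then have "A * (2*a - (s+1)) = 0" by algebra
      then have "s + 1 = 2*a" using Ap by simp
      ultimately show "R = 2*A - 2*a \<and> s + 1 = 2*a" by simp
    qed
    then show ?thesis using ge Ap by blast
  qed
  then show "R / a \<ge> 4*(2*n - m - 1)/(sqrt (4*n*(n-1) - 8*m + 1) + 1) - 2"
    by (simp add: s_def A_def)
  assume "R / a = 4*(2*n - m - 1)/(sqrt (4*n*(n-1) - 8*m + 1) + 1) - 2"
  then have E: "R = 2*A - 2*a" "s + 1 = 2*a" using main by (simp_all add: s_def A_def)
  have sq: "s^2 = 4*n*(n-1) - 8*m + 1" unfolding s_def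
    using rad by (intro real_sqrt_pow2) (smt (verit) zero_le_power2)
  have s_eq: "s = 2*a - 1" using E(2) by linarith
  have "(2*a - 1)^2 = 4*n*(n-1) - 8*m + 1" using sq by (simp only: s_eq)
  then have "2*m + a*(a-1) = n*(n-1)" by (simp add: power2_eq_square algebra_simps)
  moreover have "4*n = R + 2*a + 2*m + 2" using E(1) by (simp add: A_def)
  ultimately show "2*m + a*(a-1) = n*(n-1) \<and> 4*n = R + 2*a + 2*m + 2" by simp
qed

lemma arith_case:
  fixes al t r M :: int
  assumes a1: "1 \<le> al" and t2: "2 \<le> t" and r1: "1 \<le> r"
    and e1: "2*M + al*(al-1) = (al+t)*(al+t-1)" and e2: "4*(al+t) = r + 2*al + 2*M + 2"
  shows "t = 2 \<and> al = 1"
proof -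
  define P where "P = al*(t-1)"
  define Q where "Q = t*t"
  have e: "r = 5*t - 2 - 2*P - Q" unfolding P_def Q_def using e1 e2 by algebra
  have h1: "t - 1 \<le> P" unfolding P_def using mult_right_mono[of 1 al "t-1"] a1 t2 by simp
  have t2': "t = 2"
  proof (rule ccontr)
    assume "t \<noteq> 2"
    then have "3 \<le> t" using t2 by simp
    then have "3*t \<le> Q" unfolding Q_def using mult_right_mono[of 3 t t] by simp
    then show False using e h1 r1 by linarith
  qed
  then have "P = al" "Q = 4" unfolding P_def Q_def by simp_all
  then have "al = 1" using e r1 a1 t2' by linarith
  then show ?thesis using t2' by simp
qed



lemma star_mem: "{a,b} \<in> star_edges k \<longleftrightarrow> (a = 0 \<and> 1 \<le> b \<and> b < k) \<or> (b = 0 \<and> 1 \<le> a \<and> a < k)"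
  unfolding star_edges_def by (auto simp: doubleton_eq_iff)

lemma tri_mem: "{a,b} \<in> triangle_edges \<longleftrightarrow> a \<noteq> b \<and> a < 3 \<and> b < 3"
proof
  assume "{a,b} \<in> triangle_edges" then show "a \<noteq> b \<and> a < 3 \<and> b < 3"
    by (auto simp: triangle_edges_def doubleton_eq_iff)
next
  assume h: "a \<noteq> b \<and> a < 3 \<and> b < 3"
  then have "a = 0 \<or> a = 1 \<or> a = 2" "b = 0 \<or> b = 1 \<or> b = 2" by (auto simp: numeral_3_eq_3 less_Suc_eq)
  then show "{a,b} \<in> triangle_edges" using h by (auto simp: triangle_edges_def insert_commute)
qed

lemma card_star: "card (star_edges k) = k - 1"
proof -
  have "star_edges k = (\<lambda>i. {0,i}) ` {1..<k}" by (auto simp: star_edges_def)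
  moreover have "inj_on (\<lambda>i. {0::nat,i}) {1..<k}" by (auto simp: inj_on_def doubleton_eq_iff)
  ultimately show ?thesis by (simp add: card_image)
qed

lemma card_tri: "card triangle_edges = 3"
  by (simp add: triangle_edges_def doubleton_eq_iff)

lemma iso_card:
  fixes Ar :: "('n::finite \<times> 'n) set"
  assumes iso: "iso_to Ar k E" and Ek: "\<forall>e\<in>E. \<exists>i j. e = {i,j} \<and> i < k \<and> j < k"
  shows "card (uedges Ar) = card E"
proof -
  obtain f where f: "bij_betw f UNIV {0..<k}" and fe: "\<forall>x y. {x,y} \<in> uedges Ar \<longleftrightarrow> {f x, f y} \<in> E"
    using iso by (auto simp: iso_to_def)
  have inj: "inj f" using f by (simp add: bij_betw_def)
  have img: "f ` UNIV = {0..<k}" using f by (simp add: bij_betw_def)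
  have "bij_betw (\<lambda>e. f ` e) (uedges Ar) E"
  proof (rule bij_betwI')
    fix x y show "(f ` x = f ` y) = (x = y)" by (rule inj_image_eq_iff[OF inj])
  next
    fix x assume "x \<in> uedges Ar"
    then obtain a b where x: "x = {a,b}" "(a,b) \<in> Ar" by (auto simp: uedges_def)
    then have "{a,b} \<in> uedges Ar" by (auto simp: uedges_def)
    then have "{f a, f b} \<in> E" using fe by blast
    then show "f ` x \<in> E" using x by simp
  next
    fix y assume "y \<in> E"
    then obtain i j where y: "y = {i,j}" "i < k" "j < k" using Ek by blast
    then have "i \<in> f ` UNIV" "j \<in> f ` UNIV" using img by auto
    then obtain a b where ab: "i = f a" "j = f b" by blast
    then have "{a,b} \<in> uedges Ar" using fe \<open>y \<in> E\<close> y by simp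
    moreover have "y = f ` {a,b}" using y ab by simp
    ultimately show "\<exists>x\<in>uedges Ar. y = f ` x" by blast
  qed
  then show ?thesis by (rule bij_betw_same_card)
qed

lemma rank_star:
  fixes Ar :: "('n::finite \<times> 'n) set"
  assumes h: "\<And>x y. adj Ar x y \<Longrightarrow> x = c \<or> y = c" and o: "oriented Ar"
  shows "skew_rank Ar \<le> 2"
proof -
  define A where "A = skew_adj Ar"
  have Acc: "A$c$c = 0" using o by (simp add: A_def skew_adj_def oriented_def)
  have Aij: "i \<noteq> c \<Longrightarrow> j \<noteq> c \<Longrightarrow> A$i$j = 0" for i j
    using h skew_zero[of Ar i j] by (auto simp: A_def)
  have col: "(A *v axis c 1) $ i = A$i$c" for i
  proof -
    have "(A *v axis c 1) $ i = (\<Sum>j\<in>UNIV. if j = c then A$i$c else 0)"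
      unfolding mv_comp by (rule sum.cong) (auto simp: axis_def)
    then show ?thesis by simp
  qed
  have "range ((*v) A) \<subseteq> span {A *v axis c 1, axis c 1}"
  proof clarify
    fix x
    have eq: "A *v x = (x$c) *\<^sub>R (A *v axis c 1) + ((A *v x)$c) *\<^sub>R axis c 1"
    proof (subst vec_eq_iff, intro allI)
      fix i
      show "(A *v x) $ i = ((x$c) *\<^sub>R (A *v axis c 1) + ((A *v x)$c) *\<^sub>R axis c 1) $ i"
      proof (cases "i = c")
        case True
        then show ?thesis by (simp add: col Acc)
      next
        case False
        have "(A *v x) $ i = (\<Sum>j\<in>UNIV. if j = c then A$i$c * x$c else 0)"
          unfolding mv_comp by (rule sum.cong) (auto simp: Aij False)
        moreover have "axis c 1 $ i = (0::real)" using False by (simp add: axis_def)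
        ultimately show ?thesis by (simp add: col)
      qed
    qed
    have "(x$c) *\<^sub>R (A *v axis c 1) + ((A *v x)$c) *\<^sub>R axis c 1 \<in> span {A *v axis c 1, axis c 1}"
      by (intro span_add span_scale span_base) auto
    then show "A *v x \<in> span {A *v axis c 1, axis c 1}" using eq by metis
  qed
  then have "dim (range ((*v) A)) \<le> card {A *v axis c 1, axis c 1}" by (rule dim_le_card) simp
  also have "\<dots> \<le> 2" by (simp add: card_insert_if)
  finally show ?thesis by (simp add: skew_rank_def rank_dim_range A_def)
qed

lemma rank_three:
  fixes Ar :: "('n::finite \<times> 'n) set"
  assumes o: "oriented Ar" and c3: "CARD('n) = 3"
  shows "skew_rank Ar \<le> 2"
proof -
  define A where "A = skew_adj Ar"
  have tr: "transpose A = (\<chi> i. (-1) *s A$i)"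
    using o by (auto simp: vec_eq_iff transpose_def A_def skew_adj_def oriented_def)
  have "det A = det (transpose A)" by simp
  also have "\<dots> = (\<Prod>i\<in>(UNIV::'n set). (-1::real)) * det (\<chi> i. A$i)" unfolding tr using det_rows_mul[of "\<lambda>i. -1::real" "\<lambda>i. A$i"] by simp
  also have "\<dots> = - det A" using c3 by simp
  finally have "det A = 0" by simp
  then have "rank A < 3" using det_eq_0_rank[of A] c3 by simp
  then show ?thesis by (simp add: skew_rank_def A_def)
qed

lemma noloop: "oriented Ar \<Longrightarrow> \<not> adj Ar x x"
  by (simp add: oriented_def adj_def)

lemma Ar_empty_rank: "Ar = {} \<Longrightarrow> skew_rank (Ar::('n::finite \<times> 'n) set) = 0"
proof -
  assume "Ar = {}"
  then have "skew_adj Ar = 0" by (simp add: skew_adj_def vec_eq_iff)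
  then show ?thesis by (simp add: skew_rank_def)
qed

lemma rank_pos: "(a, b) \<in> Ar \<Longrightarrow> skew_rank (Ar::('n::finite \<times> 'n) set) \<noteq> 0"
proof
  assume ab: "(a, b) \<in> Ar" and "skew_rank Ar = 0"
  then have "skew_adj Ar = 0" by (simp add: skew_rank_def rank_eq_0)
  then have "skew_adj Ar $ a $ b = 0" by simp
  then show False using ab by (simp add: skew_adj_def)
qed



theorem theorem1p6:
  fixes Ar :: "('n::finite \<times> 'n) set"
  assumes "oriented Ar" and "connected_graph Ar"
  defines "n \<equiv> real CARD('n)" and "m \<equiv> real (card (uedges Ar))"
  shows "real (skew_rank Ar) / real (independence_number Ar)
           \<ge> 4 * (2 * n - m - 1) / (sqrt (4 * n * (n - 1) - 8 * m + 1) + 1) - 2 \<and>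
         (real (skew_rank Ar) / real (independence_number Ar)
           = 4 * (2 * n - m - 1) / (sqrt (4 * n * (n - 1) - 8 * m + 1) + 1) - 2
         \<longleftrightarrow> iso_to Ar CARD('n) (star_edges CARD('n)) \<or> iso_to Ar 3 triangle_edges)"
proof -
  note o = assms(1) and conn = assms(2)
  define N where "N = CARD('n)"
  define M where "M = card (uedges Ar)"
  define al where "al = independence_number Ar"
  define r where "r = skew_rank Ar"
  define RHS where "RHS = 4 * (2 * n - m - 1) / (sqrt (4 * n * (n - 1) - 8 * m + 1) + 1) - 2"
  have nN: "n = real N" by (simp add: n_def N_def)
  have mM: "m = real M" by (simp add: m_def M_def)
  have N1: "1 \<le> N" by (simp add: N_def Suc_le_eq)
  have cardAr: "card Ar = M" using card_uedges[OF o] by (simp add: M_def)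
  have kk: "4 * N \<le> r + 2 * al + 2 * M + 2"
    using key[OF o] dimKK[OF conn] cardAr unfolding N_def r_def al_def by linarith
  obtain I where I: "independent_set Ar I" "card I = al" using indep_ex[of Ar] al_def by blast
  have abn: "M + (al choose 2) \<le> N choose 2" using alpha_bound(1)[OF o I(1)] I(2) by (simp add: M_def N_def)
  have al1: "1 \<le> al" using indep_pos[OF o] by (simp add: al_def)
  have alN: "al \<le> N" using I(2) card_mono[of UNIV I] by (simp add: N_def)
  have abn2: "2 * M + al * (al - 1) \<le> N * (N - 1)" using abn ch2[of al] ch2[of N] by linarith
  have "real (4 * N) \<le> real (r + 2 * al + 2 * M + 2)" by (simp only: of_nat_le_iff kk)
  then have k_r: "4 * n \<le> real r + 2 * real al + 2 * m + 2" by (simp add: nN mM)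
  have "real (2 * M + al * (al - 1)) \<le> real (N * (N - 1))" by (simp only: of_nat_le_iff abn2)
  then have ab_r: "2 * m + real al * (real al - 1) \<le> n * (n - 1)"
    using al1 N1 by (simp add: nN mM of_nat_diff)
  have a1: "1 \<le> real al" using al1 by simp
  have R0: "0 \<le> real r" by simp
  have lhs: "real (skew_rank Ar) / real (independence_number Ar) = real r / real al"
    by (simp add: r_def al_def)
  have ge: "real r / real al \<ge> RHS"
    using real_ineq(1)[OF a1 k_r ab_r R0] by (simp add: RHS_def)
  have eqc: "real r / real al = RHS \<Longrightarrow> 2 * M + al * (al - 1) = N * (N - 1) \<and> 4 * N = r + 2 * al + 2 * M + 2"
  proof -
    assume "real r / real al = RHS"
    then have h: "2 * m + real al * (real al - 1) = n * (n - 1) \<and> 4 * n = real r + 2 * real al + 2 * m + 2"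
      using real_ineq(2)[OF a1 k_r ab_r R0] by (simp add: RHS_def)
    have "real (2 * M + al * (al - 1)) = real (N * (N - 1))"
      using h al1 N1 by (simp add: nN mM of_nat_diff)
    then have 1: "2 * M + al * (al - 1) = N * (N - 1)" by (simp only: of_nat_eq_iff)
    have "real (4 * N) = real (r + 2 * al + 2 * M + 2)" using h by (simp add: nN mM)
    then have 2: "4 * N = r + 2 * al + 2 * M + 2" by (simp only: of_nat_eq_iff)
    show ?thesis using 1 2 by simp
  qed
  have fwd: "real r / real al = RHS \<Longrightarrow> iso_to Ar N (star_edges N) \<or> iso_to Ar 3 triangle_edges"
  proof -
    assume eq: "real r / real al = RHS"
    have E1: "2 * M + al * (al - 1) = N * (N - 1)" and E2: "4 * N = r + 2 * al + 2 * M + 2"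
      using eqc[OF eq] by auto
    have "M + (al choose 2) = N choose 2" using E1 ch2[of al] ch2[of N] by linarith
    then have adjI: "\<forall>x y. x \<noteq> y \<longrightarrow> (adj Ar x y \<longleftrightarrow> \<not> (x \<in> I \<and> y \<in> I))"
      using alpha_bound(2)[OF o I(1)] I(2) by (simp add: M_def N_def)
    have nl: "\<not> adj Ar x x" for x using noloop[OF o] .
    have adjE: "adj Ar x y \<longleftrightarrow> x \<noteq> y \<and> \<not> (x \<in> I \<and> y \<in> I)" for x y
      using adjI nl by (cases "x = y") auto
    define J where "J = UNIV - I"
    have cJ: "card J = N - al" unfolding J_def N_def using I(2) by (simp add: card_Diff_subset)
    have uni: "finite (UNIV :: 'n set)" by simp
    consider (z) "al = N" | (one) "al + 1 = N" | (two) "al + 2 \<le> N" using alN by linarith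
    then show "iso_to Ar N (star_edges N) \<or> iso_to Ar 3 triangle_edges"
    proof cases
      case z
      have "I = UNIV" using I(2) z unfolding N_def by (intro card_subset_eq) auto
      then have "\<not> adj Ar x y" for x y using adjE by simp
      then have Ae: "Ar = {}" by (auto simp: adj_def)
      then have M0: "M = 0" by (simp add: M_def uedges_def)
      have r0: "r = 0" using Ae by (simp add: r_def Ar_empty_rank)
      have N1': "N = 1" using E2 z M0 r0 by linarith
      have "CARD('n) = 1" using N1' by (simp add: N_def)
      then obtain z0 :: 'n where U: "UNIV = {z0}" using card_1_singletonE by blast
      have all: "x = z0" for x :: 'n using U by (metis UNIV_I singletonD)
      have "inj_on (\<lambda>_. 0::nat) (UNIV::'n set)" by (rule inj_onI) (metis all)
      moreover have "(\<lambda>_. 0::nat) ` (UNIV::'n set) = {0..<N}" using N1' by auto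
      ultimately have "bij_betw (\<lambda>_. 0::nat) (UNIV::'n set) {0..<N}" by (simp add: bij_betw_def)
      moreover have "\<forall>x y. {x,y} \<in> uedges Ar \<longleftrightarrow> {(\<lambda>_::'n. 0::nat) x, (\<lambda>_::'n. 0::nat) y} \<in> star_edges N"
        using Ae N1' by (auto simp: uedges_def star_edges_def)
      ultimately have "iso_to Ar N (star_edges N)" unfolding iso_to_def by blast
      then show ?thesis by simp
    next
      case one
      then have "card J = 1" using cJ by simp
      then obtain c where Jc: "J = {c}" using card_1_singletonE by blast
      have inI: "x \<in> I \<longleftrightarrow> x \<noteq> c" for x using Jc by (auto simp: J_def)
      have adjS: "adj Ar x y \<longleftrightarrow> x \<noteq> y \<and> (x = c \<or> y = c)" for x y using adjE inI by auto
      obtain g where g: "bij_betw g (UNIV :: 'n set) {0..<N}" using ex_bij_betw_finite_nat[OF uni] by (auto simp: N_def)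
      have ginj: "inj g" using g by (simp add: bij_betw_def)
      have gimg: "g ` UNIV = {0..<N}" using g by (simp add: bij_betw_def)
      define h where "h k = (if k = 0 then g c else if k = g c then 0 else k)" for k
      define f where "f x = h (g x)" for x
      have hinj: "inj h" unfolding inj_def h_def by auto
      have fc: "f c = 0" by (simp add: f_def h_def)
      have "f = h \<circ> g" by (simp add: fun_eq_iff f_def)
      then have finj: "inj f" using inj_compose[OF hinj ginj] by simp
      have glt: "g y < N" for y using gimg by auto
      have fsub: "f ` UNIV \<subseteq> {0..<N}" using N1 by (auto simp: f_def h_def glt)
      have "card (f ` UNIV) = N" using finj by (simp add: card_image N_def)
      then have "f ` UNIV = {0..<N}" using fsub by (intro card_subset_eq) auto
      then have fb: "bij_betw f UNIV {0..<N}" using finj by (simp add: bij_betw_def)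
      have flt: "f x < N" for x using subsetD[OF fsub rangeI[of f x]] by simp
      have f0: "f x = 0 \<longleftrightarrow> x = c" for x using finj fc by (metis injD)
      have "\<forall>x y. {x,y} \<in> uedges Ar \<longleftrightarrow> {f x, f y} \<in> star_edges N"
      proof (intro allI)
        fix x y
        show "{x,y} \<in> uedges Ar \<longleftrightarrow> {f x, f y} \<in> star_edges N"
          unfolding uedges_mem star_mem adjS using f0[of x] f0[of y] flt[of x] flt[of y] by auto
      qed
      then have "iso_to Ar N (star_edges N)" using fb unfolding iso_to_def by blast
      then show ?thesis by simp
    next
      case two
      then have c2: "2 \<le> card J" using cJ by simp
      then have "J \<noteq> {}" by auto
      then obtain c1 where c1: "c1 \<in> J" by blast
      have "card (J - {c1}) = card J - 1" using c1 by (simp add: card_Diff_singleton)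
      then have "card (J - {c1}) \<noteq> 0" using c2 by simp
      then have "J - {c1} \<noteq> {}" by (metis card.empty)
      then obtain c2 where c2J: "c2 \<in> J - {c1}" by blast
      have "adj Ar c1 c2" using adjE c1 c2J by (auto simp: J_def)
      then have "r \<noteq> 0" unfolding r_def adj_def using rank_pos by metis
      define t where "t = N - al"
      have Nt: "N = al + t" using alN by (simp add: t_def)
      have iN: "int N = int al + int t" using Nt by simp
      have "int (2 * M + al * (al - 1)) = int (N * (N - 1))" using E1 by simp
      then have iE1: "2 * int M + int al * (int al - 1) = int N * (int N - 1)"
        using al1 N1 by (simp add: of_nat_diff)
      have i1: "2 * int M + int al * (int al - 1) = (int al + int t) * (int al + int t - 1)"
        using iE1 unfolding iN .
      have "int (4 * N) = int (r + 2 * al + 2 * M + 2)" using E2 by simp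
      then have "4 * int N = int r + 2 * int al + 2 * int M + 2" by simp
      then have i2: "4 * (int al + int t) = int r + 2 * int al + 2 * int M + 2" unfolding iN .
      have "int t = 2 \<and> int al = 1"
        by (rule arith_case[OF _ _ _ i1 i2]) (use al1 two Nt \<open>r \<noteq> 0\<close> in auto)
      then have t2: "t = 2" and al_1: "al = 1" by auto
      then have N3: "N = 3" using Nt by simp
      have "card I = 1" using I(2) al_1 by simp
      then obtain c where Ic: "I = {c}" using card_1_singletonE by blast
      have adjT: "adj Ar x y \<longleftrightarrow> x \<noteq> y" for x y using adjE Ic by auto
      obtain f where fb: "bij_betw f (UNIV :: 'n set) {0..<3::nat}"
        using ex_bij_betw_finite_nat[OF uni] N3 by (auto simp: N_def)
      have finj: "inj f" using fb by (simp add: bij_betw_def)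
      have flt: "f x < 3" for x using fb by (auto simp: bij_betw_def)
      have "\<forall>x y. {x,y} \<in> uedges Ar \<longleftrightarrow> {f x, f y} \<in> triangle_edges"
      proof (intro allI)
        fix x y
        show "{x,y} \<in> uedges Ar \<longleftrightarrow> {f x, f y} \<in> triangle_edges"
          unfolding uedges_mem tri_mem adjT using flt[of x] flt[of y] finj by (auto simp: inj_def)
      qed
      then have "iso_to Ar 3 triangle_edges" using fb unfolding iso_to_def by blast
      then show ?thesis by simp
    qed
  qed
  have bwd: "iso_to Ar N (star_edges N) \<or> iso_to Ar 3 triangle_edges \<Longrightarrow> real r / real al \<le> RHS"
  proof -
    assume "iso_to Ar N (star_edges N) \<or> iso_to Ar 3 triangle_edges"
    then show ?thesis
    proof
      assume iso: "iso_to Ar N (star_edges N)"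
      obtain f where fb: "bij_betw f UNIV {0..<N}" and fe: "\<forall>x y. {x,y} \<in> uedges Ar \<longleftrightarrow> {f x, f y} \<in> star_edges N"
        using iso by (auto simp: iso_to_def)
      have finj: "inj f" using fb by (simp add: bij_betw_def)
      have fimg: "f ` UNIV = {0..<N}" using fb by (simp add: bij_betw_def)
      have "0 \<in> f ` UNIV" using fimg N1 by simp
      then obtain c where fc: "f c = 0" by (metis imageE)
      have flt: "f x < N" for x using fimg by (metis atLeastLessThan_iff rangeI)
      have f0: "f x = 0 \<longleftrightarrow> x = c" for x using finj fc by (metis injD)
      have adjS: "adj Ar x y \<longleftrightarrow> x \<noteq> y \<and> (x = c \<or> y = c)" for x y
        using fe[rule_format, of x y] f0[of x] f0[of y] flt[of x] flt[of y]
        unfolding uedges_mem star_mem by auto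
      have "M = card (star_edges N)"
        unfolding M_def by (rule iso_card[OF iso]) (force simp: star_edges_def)
      then have MN: "M = N - 1" by (simp add: card_star)
      show ?thesis
      proof (cases "N = 1")
        case True
        have xc: "x = c" for x using f0[of x] flt[of x] True by simp
        have "\<not> adj Ar x y" for x y using adjS[of x y] xc[of x] xc[of y] by simp
        then have "Ar = {}" by (auto simp: adj_def)
        then have "r = 0" by (simp add: r_def Ar_empty_rank)
        moreover have "n = 1" "m = 0" using True MN by (simp_all add: nN mM)
        ultimately show ?thesis by (simp add: RHS_def)
      next
        case False
        then have N2: "2 \<le> N" using N1 by simp
        have "independent_set Ar (UNIV - {c})" using adjS by (auto simp: independent_set_def)
        then have "card (UNIV - {c}) \<le> al" unfolding al_def by (rule indep_le)
        then have alN1: "N - 1 \<le> al" by (simp add: N_def card_Diff_singleton)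
        have r2: "r \<le> 2" unfolding r_def by (rule rank_star[OF _ o]) (use adjS in auto)
        have n2: "2 \<le> n" using N2 by (simp add: nN)
        have mn: "m = n - 1" using MN N1 by (simp add: nN mM of_nat_diff)
        have rad: "4 * n * (n - 1) - 8 * m + 1 = (2 * n - 3)^2" by (simp add: mn power2_eq_square algebra_simps)
        have sq: "sqrt (4 * n * (n - 1) - 8 * m + 1) = 2 * n - 3"
          unfolding rad by (rule real_sqrt_unique) (use n2 in auto)
        have e1: "4 * (2 * n - m - 1) = 4 * n" using mn by simp
        have e2: "sqrt (4 * n * (n - 1) - 8 * m + 1) + 1 = 2 * (n - 1)" using sq by simp
        have "RHS = 4 * n / (2 * (n - 1)) - 2" by (simp only: RHS_def e1 e2)
        also have "\<dots> = 2 / (n - 1)" using n2 by (simp add: field_simps)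
        finally have R: "RHS = 2 / (n - 1)" .
        have alr: "n - 1 \<le> real al" using alN1 N1 by (simp add: nN of_nat_diff)
        have "real r / real al \<le> 2 / real al" by (rule divide_right_mono) (use r2 a1 in auto)
        also have "\<dots> \<le> 2 / (n - 1)" by (rule divide_left_mono) (use alr n2 a1 in \<open>auto intro: mult_pos_pos\<close>)
        finally show ?thesis using R by simp
      qed
    next
      assume iso: "iso_to Ar 3 triangle_edges"
      obtain f where fb: "bij_betw f (UNIV::'n set) {0..<3::nat}"
        using iso by (auto simp: iso_to_def)
      have N3: "N = 3" using bij_betw_same_card[OF fb] by (simp add: N_def)
      have "M = card triangle_edges"
        unfolding M_def
      proof (rule iso_card[OF iso])
        have t1: "\<exists>i j. {0::nat,1} = {i,j} \<and> i < (3::nat) \<and> j < 3"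
          by (rule exI[of _ "0::nat"], rule exI[of _ "1::nat"], simp)
        have t2: "\<exists>i j. {1::nat,2} = {i,j} \<and> i < (3::nat) \<and> j < 3"
          by (rule exI[of _ "1::nat"], rule exI[of _ "2::nat"], simp)
        have t3: "\<exists>i j. {0::nat,2} = {i,j} \<and> i < (3::nat) \<and> j < 3"
          by (rule exI[of _ "0::nat"], rule exI[of _ "2::nat"], simp)
        show "\<forall>e\<in>triangle_edges. \<exists>i j. e = {i,j} \<and> i < (3::nat) \<and> j < 3"
          unfolding triangle_edges_def using t1 t2 t3 by blast
      qed
      then have M3: "M = 3" by (simp add: card_tri)
      have r2: "r \<le> 2" unfolding r_def by (rule rank_three[OF o]) (use N3 in \<open>simp add: N_def\<close>)
      have R: "RHS = 2" using N3 M3 by (simp add: RHS_def nN mM)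
      have "real r / real al \<le> 2 / real al" by (rule divide_right_mono) (use r2 a1 in auto)
      also have "\<dots> \<le> 2" using a1 by (simp add: divide_simps)
      finally show ?thesis using R by simp
    qed
  qed
  have iff: "real r / real al = RHS \<longleftrightarrow> iso_to Ar N (star_edges N) \<or> iso_to Ar 3 triangle_edges"
  proof
    assume "real r / real al = RHS" then show "iso_to Ar N (star_edges N) \<or> iso_to Ar 3 triangle_edges" by (rule fwd)
  next
    assume "iso_to Ar N (star_edges N) \<or> iso_to Ar 3 triangle_edges"
    then have "real r / real al \<le> RHS" by (rule bwd)
    with ge show "real r / real al = RHS" by simp
  qed
  show ?thesis unfolding lhs RHS_def[symmetric] N_def[symmetric] using ge iff by blast
qed

end
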